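(* Let $(G,d,(D_\lambda)_{\lambda>0},\Gamma,V)$ be a dilation datum, $\lambda_0>1$ with $D:=D_{\lambda_0}$ satisfying $D(\Gamma)\subset\Gamma$, and $r_+>0$ with $V\subset B(e,r_+)$. Let $r>r_+$ and $\lambda_0>\frac{r}{r-r_+}$. If $B(e,r)\subset V(n_0)$ for some $n_0\in\mathbb N$, then every bounded subset of $G$ is contained in $V(n)$ for some $n\in\mathbb N$, and for all $k\in\mathbb N$ \[B(e,c_-\lambda_0^{k-1})\subset V(n_0+k)\subset B(e,c_+\lambda_0^{n_0+k}),\] where $c_-:=\lambda_0(r-r_+)-r>0$ and $c_+:=r\big(1+\frac{\lambda_0}{\lambda_0-1}\big)$.
   Context: Dilation datum $(G,d,(D_\lambda),\Gamma,V)$: $G$ connected lcsc group, $d$ left-invariant metric inducing the topology, $\lambda\mapsto D_\lambda$ homomorphism $(\mathbb R_{>0},\cdot)\to\mathrm{Aut}(G)$ with $d(D_\lambda g,D_\lambda h)=\lambda d(g,h)$; $\Gamma$ uniform lattice with $D_\lambda(\Gamma)\subset\Gamma$ for some $\lambda>1$; $V$ bounded Borel set containing an open identity neighbourhood with $G=\bigsqcup_{\gamma\in\Gamma}\gamma V$. $B(g,r)$ is the open $d$-ball. $V(0):=V$ and $V(n):=D\big((V(n-1)\cap\Gamma)V\big)$ for $n\ge1$. *)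

theory Defs
  imports "HOL-Analysis.Analysis"
begin

text \<open>The group G is modelled as a type 'a with a (not necessarily commutative)
group structure written additively (class group_add; identity 0, product x + y)
and a metric (class metric_space) which induces the topology.\<close>

definition topological_group :: "'a::{metric_space,group_add} itself \<Rightarrow> bool" where
  "topological_group _ \<longleftrightarrow>
     continuous_on UNIV (\<lambda>p::'a \<times> 'a. fst p + snd p) \<and>
     continuous_on UNIV (uminus :: 'a \<Rightarrow> 'a)"

definition left_invariant_metric :: "'a::{metric_space,group_add} itself \<Rightarrow> bool" where
  "left_invariant_metric _ \<longleftrightarrow> (\<forall>g x y :: 'a. dist (g + x) (g + y) = dist x y)"

definition lmult :: "'a::group_add \<Rightarrow> 'a set \<Rightarrow> 'a set" where
  "lmult g A = (\<lambda>a. g + a) ` A"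

definition setprod :: "'a::group_add set \<Rightarrow> 'a set \<Rightarrow> 'a set" where
  "setprod A B = {a + b | a b. a \<in> A \<and> b \<in> B}"

definition is_subgroup :: "'a::group_add set \<Rightarrow> bool" where
  "is_subgroup H \<longleftrightarrow> 0 \<in> H \<and> (\<forall>x\<in>H. \<forall>y\<in>H. x + y \<in> H) \<and> (\<forall>x\<in>H. - x \<in> H)"

definition uniform_lattice :: "'a::{metric_space,group_add} set \<Rightarrow> bool" where
  "uniform_lattice \<Gamma> \<longleftrightarrow> is_subgroup \<Gamma> \<and>
     (\<forall>\<gamma>\<in>\<Gamma>. \<exists>\<epsilon>>0. \<forall>\<gamma>'\<in>\<Gamma>. dist \<gamma> \<gamma>' < \<epsilon> \<longrightarrow> \<gamma>' = \<gamma>) \<and>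
     (\<exists>K. compact K \<and> setprod \<Gamma> K = UNIV)"

definition automorphism :: "('a::{metric_space,group_add} \<Rightarrow> 'a) \<Rightarrow> bool" where
  "automorphism f \<longleftrightarrow> bij f \<and> (\<forall>x y. f (x + y) = f x + f y) \<and> homeomorphism UNIV UNIV f (inv f)"

definition dilation_datum ::
  "(real \<Rightarrow> 'a::{metric_space,group_add,second_countable_topology} \<Rightarrow> 'a) \<Rightarrow> 'a set \<Rightarrow> 'a set \<Rightarrow> bool" where
  "dilation_datum D \<Gamma> V \<longleftrightarrow>
     topological_group TYPE('a) \<and> connected (UNIV :: 'a set) \<and> locally compact (UNIV :: 'a set) \<and>
     left_invariant_metric TYPE('a) \<and>
     D 1 = id \<and> (\<forall>s>0. \<forall>t>0. D (s * t) = D s \<circ> D t) \<and>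
     (\<forall>s>0. automorphism (D s)) \<and>
     (\<forall>s>0. \<forall>g h. dist (D s g) (D s h) = s * dist g h) \<and>
     uniform_lattice \<Gamma> \<and> (\<exists>s>1. D s ` \<Gamma> \<subseteq> \<Gamma>) \<and>
     bounded V \<and> V \<in> sets borel \<and> (\<exists>U. open U \<and> 0 \<in> U \<and> U \<subseteq> V) \<and>
     (\<forall>g. \<exists>!\<gamma>. \<gamma> \<in> \<Gamma> \<and> g \<in> lmult \<gamma> V)"

fun Vn :: "('a::group_add \<Rightarrow> 'a) \<Rightarrow> 'a set \<Rightarrow> 'a set \<Rightarrow> nat \<Rightarrow> 'a set" where
  "Vn D \<Gamma> V 0 = V"
| "Vn D \<Gamma> V (Suc n) = D ` setprod (Vn D \<Gamma> V n \<inter> \<Gamma>) V"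

end

theory Submission
  imports Defs
begin

lemma tri:
  fixes a b :: "'a::{metric_space,group_add}"
  assumes li: "\<forall>g x y :: 'a. dist (g + x) (g + y) = dist x y"
  shows "dist 0 (a + b) \<le> dist 0 a + dist 0 b"
proof -
  have "dist a (a + b) = dist 0 b" using li[rule_format, of a 0 b] by simp
  then show ?thesis using dist_triangle[of 0 "a+b" a] by simp
qed

lemma negnorm:
  fixes v :: "'a::{metric_space,group_add}"
  assumes li: "\<forall>g x y :: 'a. dist (g + x) (g + y) = dist x y"
  shows "dist 0 (- v) = dist 0 v"
  using li[rule_format, of v 0 "-v"] by (simp add: dist_commute)

theorem lemma5:
  fixes D :: "real \<Rightarrow> 'a::{metric_space,group_add,second_countable_topology} \<Rightarrow> 'a"
    and \<Gamma> V :: "'a set"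
    and l\<^sub>0 r\<^sub>p r :: real and n\<^sub>0 :: nat
  assumes datum: "dilation_datum D \<Gamma> V"
    and lam_gt: "l\<^sub>0 > 1" and D_Gamma: "D l\<^sub>0 ` \<Gamma> \<subseteq> \<Gamma>"
    and rp_pos: "r\<^sub>p > 0" and V_sub: "V \<subseteq> ball 0 r\<^sub>p"
    and r_gt: "r > r\<^sub>p" and lam_big: "l\<^sub>0 > r / (r - r\<^sub>p)"
    and ball_sub: "ball 0 r \<subseteq> Vn (D l\<^sub>0) \<Gamma> V n\<^sub>0"
  shows "(\<forall>B::'a set. bounded B \<longrightarrow> (\<exists>n. B \<subseteq> Vn (D l\<^sub>0) \<Gamma> V n)) \<and>
         (let c\<^sub>m = l\<^sub>0 * (r - r\<^sub>p) - r; c\<^sub>p = r * (1 + l\<^sub>0 / (l\<^sub>0 - 1)) in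
           c\<^sub>m > 0 \<and>
           (\<forall>k::nat. ball 0 (c\<^sub>m * l\<^sub>0 powr (real k - 1)) \<subseteq> Vn (D l\<^sub>0) \<Gamma> V (n\<^sub>0 + k) \<and>
                     Vn (D l\<^sub>0) \<Gamma> V (n\<^sub>0 + k) \<subseteq> ball 0 (c\<^sub>p * l\<^sub>0 ^ (n\<^sub>0 + k))))"
proof -
  define E where "E = D l\<^sub>0"
  define cm where "cm = l\<^sub>0 * (r - r\<^sub>p) - r"
  define cp where "cp = r * (1 + l\<^sub>0 / (l\<^sub>0 - 1))"
  have li: "\<forall>g x y :: 'a. dist (g + x) (g + y) = dist x y"
    using datum unfolding dilation_datum_def left_invariant_metric_def by (elim conjE) assumption
  have autall: "\<forall>s>0. automorphism (D s)" using datum unfolding dilation_datum_def by (elim conjE) assumption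
  have aut: "automorphism E" using autall lam_gt unfolding E_def by simp
  have hom: "\<And>x y. E (x + y) = E x + E y" using aut unfolding automorphism_def by blast
  have surjE: "surj E" using aut unfolding automorphism_def bij_def by blast
  have E0: "E 0 = 0" using hom[of 0 0] by (metis add.right_neutral add_left_cancel)
  have dall: "\<forall>s>0. \<forall>g h. dist (D s g) (D s h) = s * dist g h"
    using datum unfolding dilation_datum_def by (elim conjE) assumption
  have dE: "\<And>g h. dist (E g) (E h) = l\<^sub>0 * dist g h"
    using dall lam_gt unfolding E_def by simp
  have nE: "\<And>x. dist 0 (E x) = l\<^sub>0 * dist 0 x" using dE[of 0] E0 by simp
  have tall: "\<forall>g. \<exists>!\<gamma>. \<gamma> \<in> \<Gamma> \<and> g \<in> lmult \<gamma> V"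
    using datum unfolding dilation_datum_def by (elim conjE) assumption
  have tile: "\<exists>\<gamma> v. \<gamma> \<in> \<Gamma> \<and> v \<in> V \<and> g = \<gamma> + v" for g
  proof -
    obtain \<gamma> where "\<gamma> \<in> \<Gamma>" "g \<in> lmult \<gamma> V" using tall by blast
    then show ?thesis unfolding lmult_def by blast
  qed
  have rrp: "r - r\<^sub>p > 0" using r_gt by simp
  have cm_pos: "cm > 0"
    using lam_big rrp by (simp add: cm_def field_simps)
  have l1: "l\<^sub>0 - 1 > 0" using lam_gt by simp
  have ne: "l\<^sub>0 - 1 \<noteq> 0" "l\<^sub>0 \<noteq> 1" using lam_gt by auto
  define s where "s k = l\<^sub>0 * r\<^sub>p / (l\<^sub>0 - 1) + l\<^sub>0 ^ k * cm / (l\<^sub>0 - 1)" for k :: nat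
  have "s 0 = (r * (l\<^sub>0 - 1)) / (l\<^sub>0 - 1)"
    unfolding s_def cm_def by (simp add: add_divide_distrib[symmetric] algebra_simps)
  then have s0: "s 0 = r" using l1 by simp
  have key: "l\<^sub>0 / (l\<^sub>0 - 1) = 1 + 1 / (l\<^sub>0 - 1)" using ne by (simp add: field_simps)
  have sS: "s (Suc k) = l\<^sub>0 * (s k - r\<^sub>p)" for k
  proof -
    have "l\<^sub>0 * (s k - r\<^sub>p) = l\<^sub>0 * r\<^sub>p * (l\<^sub>0 / (l\<^sub>0 - 1)) + l\<^sub>0 * l\<^sub>0 ^ k * cm / (l\<^sub>0 - 1) - l\<^sub>0 * r\<^sub>p"
      unfolding s_def by (simp add: algebra_simps)
    also have "\<dots> = l\<^sub>0 * r\<^sub>p * (1 + 1 / (l\<^sub>0 - 1)) + l\<^sub>0 * l\<^sub>0 ^ k * cm / (l\<^sub>0 - 1) - l\<^sub>0 * r\<^sub>p"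
      using key by simp
    also have "\<dots> = s (Suc k)" unfolding s_def by (simp add: algebra_simps)
    finally show ?thesis by simp
  qed
  have step: "ball 0 (l\<^sub>0 * (t - r\<^sub>p)) \<subseteq> Vn E \<Gamma> V (Suc m)"
    if H: "ball 0 t \<subseteq> Vn E \<Gamma> V m" for t m
  proof
    fix g assume "g \<in> ball (0::'a) (l\<^sub>0 * (t - r\<^sub>p))"
    then have g: "dist 0 g < l\<^sub>0 * (t - r\<^sub>p)" by simp
    obtain h where h: "g = E h" using surjE by (metis surj_def)
    have hn: "dist 0 h < t - r\<^sub>p" using g nE[of h] h lam_gt by (simp add: mult_less_cancel_left_pos)
    obtain \<gamma> v where gv: "\<gamma> \<in> \<Gamma>" "v \<in> V" "h = \<gamma> + v" using tile by blast
    have "\<gamma> = h + - v" using gv(3) by (simp add: algebra_simps)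
    then have "dist 0 \<gamma> \<le> dist 0 h + dist 0 v" using tri[OF li, of h "-v"] negnorm[OF li, of v] by simp
    moreover have "dist 0 v < r\<^sub>p" using gv(2) V_sub by auto
    ultimately have "dist 0 \<gamma> < t" using hn by simp
    then have "\<gamma> \<in> Vn E \<Gamma> V m" using H by auto
    then have "h \<in> setprod (Vn E \<Gamma> V m \<inter> \<Gamma>) V" using gv unfolding setprod_def by blast
    then show "g \<in> Vn E \<Gamma> V (Suc m)" using h by simp
  qed
  have low: "ball 0 (s k) \<subseteq> Vn E \<Gamma> V (n\<^sub>0 + k)" for k
  proof (induction k)
    case 0 then show ?case using ball_sub s0 E_def by simp
  next
    case (Suc k) then show ?case using step[OF Suc] sS by simp
  qed
  have sge: "l\<^sub>0 ^ k * cm / (l\<^sub>0 - 1) \<le> s k" for k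
    using l1 rp_pos lam_gt unfolding s_def by simp
  have low2: "cm * l\<^sub>0 powr (real k - 1) \<le> s k" for k
  proof -
    have "cm * l\<^sub>0 powr (real k - 1) = l\<^sub>0 ^ k * cm / l\<^sub>0"
      using lam_gt by (simp add: powr_diff powr_realpow)
    also have "\<dots> \<le> l\<^sub>0 ^ k * cm / (l\<^sub>0 - 1)"
      using l1 cm_pos lam_gt by (intro divide_left_mono) auto
    finally show ?thesis using sge[of k] by simp
  qed
  define R where "R n = r\<^sub>p * (l\<^sub>0 ^ n + l\<^sub>0 * (l\<^sub>0 ^ n - 1) / (l\<^sub>0 - 1))" for n :: nat
  have up: "Vn E \<Gamma> V n \<subseteq> ball 0 (R n)" for n
  proof (induction n)
    case 0 then show ?case using V_sub by (simp add: R_def)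
  next
    case (Suc n)
    show ?case
    proof
      fix x assume "x \<in> Vn E \<Gamma> V (Suc n)"
      then obtain a b where ab: "a \<in> Vn E \<Gamma> V n" "b \<in> V" "x = E (a + b)"
        by (auto simp add: setprod_def)
      have "dist 0 (a + b) \<le> dist 0 a + dist 0 b" by (rule tri[OF li])
      also have "\<dots> < R n + r\<^sub>p" using ab Suc V_sub by (intro add_strict_mono) auto
      finally have lt: "l\<^sub>0 * dist 0 (a + b) < l\<^sub>0 * (R n + r\<^sub>p)" using lam_gt by simp
      have key2: "l\<^sub>0 * (l\<^sub>0 ^ n - 1) / (l\<^sub>0 - 1) + 1 = (l\<^sub>0 * l\<^sub>0 ^ n - 1) / (l\<^sub>0 - 1)"
        using ne by (simp add: field_simps)
      have "l\<^sub>0 * (R n + r\<^sub>p) = r\<^sub>p * l\<^sub>0 * l\<^sub>0 ^ n + r\<^sub>p * l\<^sub>0 * (l\<^sub>0 * (l\<^sub>0 ^ n - 1) / (l\<^sub>0 - 1) + 1)"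
        unfolding R_def by (simp add: algebra_simps)
      also have "\<dots> = R (Suc n)" unfolding R_def key2 by (simp add: algebra_simps)
      finally have eq: "l\<^sub>0 * (R n + r\<^sub>p) = R (Suc n)" .
      show "x \<in> ball 0 (R (Suc n))" using ab nE lt eq by simp
    qed
  qed
  have Rle: "R n \<le> cp * l\<^sub>0 ^ n" for n
  proof -
    have p: "l\<^sub>0 ^ n > 0" using lam_gt by simp
    have "l\<^sub>0 * (l\<^sub>0 ^ n - 1) / (l\<^sub>0 - 1) \<le> l\<^sub>0 * l\<^sub>0 ^ n / (l\<^sub>0 - 1)"
      using l1 lam_gt by (intro divide_right_mono) auto
    then have "R n \<le> r\<^sub>p * (l\<^sub>0 ^ n * (1 + l\<^sub>0 / (l\<^sub>0 - 1)))"
      unfolding R_def using rp_pos by (intro mult_left_mono) (auto simp: field_simps)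
    also have "\<dots> \<le> r * (l\<^sub>0 ^ n * (1 + l\<^sub>0 / (l\<^sub>0 - 1)))"
      using r_gt p l1 lam_gt by (intro mult_right_mono) auto
    finally show ?thesis unfolding cp_def by (simp add: algebra_simps)
  qed
  have part1: "\<forall>B::'a set. bounded B \<longrightarrow> (\<exists>n. B \<subseteq> Vn E \<Gamma> V n)"
  proof (intro allI impI)
    fix B :: "'a set" assume "bounded B"
    then obtain Q where Q: "B \<subseteq> ball 0 Q" using bounded_subset_ballD by blast
    obtain k where k: "Q * (l\<^sub>0 - 1) / cm < l\<^sub>0 ^ k" using real_arch_pow[OF lam_gt] by blast
    then have "Q < l\<^sub>0 ^ k * cm / (l\<^sub>0 - 1)" using cm_pos l1 by (simp add: field_simps)
    then have "Q \<le> s k" using sge[of k] by simp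
    then have "B \<subseteq> ball 0 (s k)" using Q by auto
    then show "\<exists>n. B \<subseteq> Vn E \<Gamma> V n" using low by blast
  qed
  have part2: "\<forall>k::nat. ball 0 (cm * l\<^sub>0 powr (real k - 1)) \<subseteq> Vn E \<Gamma> V (n\<^sub>0 + k) \<and>
      Vn E \<Gamma> V (n\<^sub>0 + k) \<subseteq> ball 0 (cp * l\<^sub>0 ^ (n\<^sub>0 + k))"
  proof
    fix k
    show "ball 0 (cm * l\<^sub>0 powr (real k - 1)) \<subseteq> Vn E \<Gamma> V (n\<^sub>0 + k) \<and>
      Vn E \<Gamma> V (n\<^sub>0 + k) \<subseteq> ball 0 (cp * l\<^sub>0 ^ (n\<^sub>0 + k))"
      using low[of k] low2[of k] up[of "n\<^sub>0 + k"] Rle[of "n\<^sub>0 + k"] by auto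
  qed
  show ?thesis
    unfolding E_def[symmetric] Let_def cm_def[symmetric] cp_def[symmetric]
    using part1 part2 cm_pos by blast
qed

end
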